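(* For two-stage edge-weighted bipartite matching with advice, the optimal robustness-consistency tradeoff is the line segment between $(R,C)=(0,1)$ and $(R,C)=(\tfrac12,\tfrac12)$: (i) for every $R\in[0,\tfrac12]$ there is an algorithm that is $R$-robust and $(1-R)$-consistent; (ii) for every $R\ge 0$, every $R$-robust algorithm is at most $(1-R)$-consistent (in particular no algorithm is more than $\tfrac12$-robust).
   Context: Setting (two-stage edge-weighted bipartite matching with advice). A bipartite graph $G=(D,S,E)$ with nonnegative edge weights $w_e$ has offline vertices $S$ and online vertices $D=D_1\sqcup D_2$ arriving in two stages; $E_k$ is the set of edges between $D_k$ and $S$. An algorithm sees $(D_1,S,E_1)$ and the advice (a matching $A\subseteq E_1$), irrevocably chooses a (possibly random) matching $M_1\subseteq E_1$, then sees $E_2$ and chooses a matching $M_2\subseteq E_2$ such that $M_1\cup M_2$ is a matching; its value is the expected total edge weight of $M_1\cup M_2$. $\mathsf{OPT}(G)$ is the maximum weight of a matching in $G$; $\mathsf{ADVICE}(G,A)=w(A)+\max\{w(M): M\subseteq E_2,\ A\cup M\text{ a matching}\}$. An algorithm is $R$-robust if its value is $\ge R\cdot\mathsf{OPT}(G)$ for all $G,A$, and $C$-consistent if its value is $\ge C\cdot\mathsf{ADVICE}(G,A)$ for all $G,A$. *)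

theory Defs
  imports "HOL-Probability.Probability_Mass_Function"
begin

text \<open>Edges are pairs (d, s) with d an online vertex and s an offline vertex.
  Vertices are labelled by natural numbers; the position in the pair distinguishes
  the sides of the bipartition.\<close>

type_synonym edge = "nat \<times> nat"

definition matching :: "edge set \<Rightarrow> bool" where
  "matching M \<longleftrightarrow> (\<forall>e\<in>M. \<forall>e'\<in>M. e \<noteq> e' \<longrightarrow> fst e \<noteq> fst e' \<and> snd e \<noteq> snd e')"

definition weight :: "(edge \<Rightarrow> real) \<Rightarrow> edge set \<Rightarrow> real" where
  "weight w M = (\<Sum>e\<in>M. w e)"

definition two_stage_instance ::
  "nat set \<Rightarrow> nat set \<Rightarrow> nat set \<Rightarrow> edge set \<Rightarrow> edge set \<Rightarrow> (edge \<Rightarrow> real) \<Rightarrow> bool" where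
  "two_stage_instance D1 D2 S E1 E2 w \<longleftrightarrow>
     finite D1 \<and> finite D2 \<and> finite S \<and> D1 \<inter> D2 = {} \<and>
     E1 \<subseteq> D1 \<times> S \<and> E2 \<subseteq> D2 \<times> S \<and> (\<forall>e\<in>E1 \<union> E2. 0 \<le> w e)"

definition valid_advice :: "edge set \<Rightarrow> edge set \<Rightarrow> bool" where
  "valid_advice E1 A \<longleftrightarrow> A \<subseteq> E1 \<and> matching A"

definition restrict_w :: "edge set \<Rightarrow> (edge \<Rightarrow> real) \<Rightarrow> edge \<Rightarrow> real" where
  "restrict_w E w = (\<lambda>e. if e \<in> E then w e else 0)"

definition OPT :: "edge set \<Rightarrow> edge set \<Rightarrow> (edge \<Rightarrow> real) \<Rightarrow> real" where
  "OPT E1 E2 w = Max (weight w ` {M. M \<subseteq> E1 \<union> E2 \<and> matching M})"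

definition ADVICE :: "edge set \<Rightarrow> (edge \<Rightarrow> real) \<Rightarrow> edge set \<Rightarrow> real" where
  "ADVICE E2 w A = weight w A + Max (weight w ` {M. M \<subseteq> E2 \<and> matching (A \<union> M)})"

text \<open>An algorithm: stage 1 sees (D1, S, E1, weights on E1) and the advice A and outputs a
  random matching M1; stage 2 additionally sees the realised M1 and (D2, E2, weights on E2)
  and outputs a random M2.\<close>

type_synonym stage1_alg =
  "nat set \<Rightarrow> nat set \<Rightarrow> edge set \<Rightarrow> (edge \<Rightarrow> real) \<Rightarrow> edge set \<Rightarrow> edge set pmf"
type_synonym stage2_alg =
  "nat set \<Rightarrow> nat set \<Rightarrow> edge set \<Rightarrow> (edge \<Rightarrow> real) \<Rightarrow> edge set \<Rightarrow> edge set
    \<Rightarrow> nat set \<Rightarrow> edge set \<Rightarrow> (edge \<Rightarrow> real) \<Rightarrow> edge set pmf"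
type_synonym algorithm = "stage1_alg \<times> stage2_alg"

definition stage1_out :: "algorithm \<Rightarrow> nat set \<Rightarrow> nat set \<Rightarrow> edge set \<Rightarrow> edge set
    \<Rightarrow> (edge \<Rightarrow> real) \<Rightarrow> edge set \<Rightarrow> edge set pmf" where
  "stage1_out alg D1 S E1 E2 w A = fst alg D1 S E1 (restrict_w E1 w) A"

definition stage2_out :: "algorithm \<Rightarrow> nat set \<Rightarrow> nat set \<Rightarrow> nat set \<Rightarrow> edge set \<Rightarrow> edge set
    \<Rightarrow> (edge \<Rightarrow> real) \<Rightarrow> edge set \<Rightarrow> edge set \<Rightarrow> edge set pmf" where
  "stage2_out alg D1 D2 S E1 E2 w A M1 =
     snd alg D1 S E1 (restrict_w E1 w) A M1 D2 E2 (restrict_w E2 w)"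

definition valid_alg :: "algorithm \<Rightarrow> bool" where
  "valid_alg alg \<longleftrightarrow>
     (\<forall>D1 D2 S E1 E2 w A. two_stage_instance D1 D2 S E1 E2 w \<and> valid_advice E1 A \<longrightarrow>
        (\<forall>M1 \<in> set_pmf (stage1_out alg D1 S E1 E2 w A).
            M1 \<subseteq> E1 \<and> matching M1 \<and>
            (\<forall>M2 \<in> set_pmf (stage2_out alg D1 D2 S E1 E2 w A M1).
                M2 \<subseteq> E2 \<and> matching (M1 \<union> M2))))"

definition alg_value :: "algorithm \<Rightarrow> nat set \<Rightarrow> nat set \<Rightarrow> nat set \<Rightarrow> edge set \<Rightarrow> edge set
    \<Rightarrow> (edge \<Rightarrow> real) \<Rightarrow> edge set \<Rightarrow> real" where
  "alg_value alg D1 D2 S E1 E2 w A =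
     measure_pmf.expectation (stage1_out alg D1 S E1 E2 w A)
       (\<lambda>M1. measure_pmf.expectation (stage2_out alg D1 D2 S E1 E2 w A M1)
          (\<lambda>M2. weight w (M1 \<union> M2)))"

definition robust :: "real \<Rightarrow> algorithm \<Rightarrow> bool" where
  "robust R alg \<longleftrightarrow>
     (\<forall>D1 D2 S E1 E2 w A. two_stage_instance D1 D2 S E1 E2 w \<and> valid_advice E1 A \<longrightarrow>
        alg_value alg D1 D2 S E1 E2 w A \<ge> R * OPT E1 E2 w)"

definition consistent :: "real \<Rightarrow> algorithm \<Rightarrow> bool" where
  "consistent C alg \<longleftrightarrow>
     (\<forall>D1 D2 S E1 E2 w A. two_stage_instance D1 D2 S E1 E2 w \<and> valid_advice E1 A \<longrightarrow>
        alg_value alg D1 D2 S E1 E2 w A \<ge> C * ADVICE E2 w A)"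

end

theory Submission imports Defs begin

lemma exp_mono:
  fixes f g :: "'a \<Rightarrow> real"
  assumes "finite (set_pmf M)" "\<And>x. x \<in> set_pmf M \<Longrightarrow> f x \<le> g x"
  shows "measure_pmf.expectation M f \<le> measure_pmf.expectation M g"
  using assms by (intro integral_mono_AE) (auto simp: integrable_measure_pmf_finite AE_measure_pmf_iff)

lemma exp_le:
  fixes f :: "'a \<Rightarrow> real"
  assumes "finite (set_pmf M)" "\<And>x. x \<in> set_pmf M \<Longrightarrow> f x \<le> c"
  shows "measure_pmf.expectation M f \<le> c"
proof -
  have "measure_pmf.expectation M f \<le> measure_pmf.expectation M (\<lambda>_. c)"
    using assms by (intro exp_mono) auto
  then show ?thesis by simp
qed

lemma matching_empty[simp]: "matching {}" by (simp add: matching_def)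
lemma matching_subset: "matching M \<Longrightarrow> N \<subseteq> M \<Longrightarrow> matching N"
  unfolding matching_def by blast
lemma matching_single[simp]: "matching {e}" by (simp add: matching_def)

lemma weight_restrict: "M \<subseteq> E \<Longrightarrow> weight (restrict_w E w) M = weight w M"
  unfolding weight_def restrict_w_def by (intro sum.cong) auto

lemma weight_mono: "finite Y \<Longrightarrow> X \<subseteq> Y \<Longrightarrow> (\<forall>e\<in>Y. 0 \<le> w e) \<Longrightarrow> weight w X \<le> weight w Y"
  unfolding weight_def by (intro sum_mono2) auto

lemma weight_nonneg: "(\<forall>e\<in>Y. 0 \<le> w e) \<Longrightarrow> 0 \<le> weight w Y"
  unfolding weight_def by (intro sum_nonneg) auto

definition best :: "edge set \<Rightarrow> (edge \<Rightarrow> real) \<Rightarrow> edge set \<Rightarrow> edge set" where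
  "best E w M1 = (SOME M. M \<subseteq> E \<and> matching (M1 \<union> M) \<and>
      (\<forall>M'. M' \<subseteq> E \<and> matching (M1 \<union> M') \<longrightarrow> weight w M' \<le> weight w M))"

lemma best_ok:
  assumes "finite E" "matching M1"
  shows "best E w M1 \<subseteq> E \<and> matching (M1 \<union> best E w M1) \<and>
      (\<forall>M'. M' \<subseteq> E \<and> matching (M1 \<union> M') \<longrightarrow> weight w M' \<le> weight w (best E w M1))"
proof -
  let ?C = "{M. M \<subseteq> E \<and> matching (M1 \<union> M)}"
  have fin: "finite ?C" using assms(1) by (rule finite_subset[rotated, OF finite_Pow_iff[THEN iffD2]]) auto
  have ne: "{} \<in> ?C" using assms(2) by simp
  have "Max (weight w ` ?C) \<in> weight w ` ?C" using fin ne by (intro Max_in) auto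
  then obtain M where M: "M \<in> ?C" "weight w M = Max (weight w ` ?C)" by auto
  have "\<forall>M'. M' \<subseteq> E \<and> matching (M1 \<union> M') \<longrightarrow> weight w M' \<le> weight w M"
    using M fin by auto
  then have "\<exists>M. M \<subseteq> E \<and> matching (M1 \<union> M) \<and>
      (\<forall>M'. M' \<subseteq> E \<and> matching (M1 \<union> M') \<longrightarrow> weight w M' \<le> weight w M)" using M by blast
  then show ?thesis unfolding best_def by (rule someI_ex)
qed


lemma key:
  assumes va: "valid_alg alg" and rob: "robust R alg" and R0: "0 \<le> R"
  shows "\<exists>q. R \<le> q \<and> q \<le> 1 - R \<and> (consistent C alg \<longrightarrow> C \<le> q)"
proof -
  define E1 :: "edge set" where "E1 = {(0,0)}"
  define w1 :: "edge \<Rightarrow> real" where "w1 = (\<lambda>e. if e = (0,0) then 1 else 0)"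
  define w2 :: "real \<Rightarrow> edge \<Rightarrow> real" where
    "w2 = (\<lambda>W e. if e = (0,0) then 1 else if e = (1,0) then W else 0)"
  define P where "P = stage1_out alg {0} {0} E1 {} w1 E1"
  have P2: "stage1_out alg {0} {0} E1 {(1,0)} (w2 W) E1 = P" for W
  proof -
    have "restrict_w E1 (w2 W) = restrict_w E1 w1"
      by (auto simp: restrict_w_def E1_def w1_def w2_def)
    then show ?thesis by (simp add: P_def stage1_out_def)
  qed
  have insta: "two_stage_instance {0} {1} {0} E1 {} w1"
    by (simp add: two_stage_instance_def E1_def w1_def)
  have instb: "two_stage_instance {0} {1} {0} E1 {(1,0)} (w2 W)" if "0 \<le> W" for W
    using that by (simp add: two_stage_instance_def E1_def w2_def)
  have adv: "valid_advice E1 E1" by (simp add: valid_advice_def E1_def)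
  have suppP: "M1 \<subseteq> E1" if "M1 \<in> set_pmf P" for M1
    using va insta adv that unfolding valid_alg_def P_def by blast
  have finP: "finite (set_pmf P)"
    by (rule finite_subset[of _ "Pow E1"]) (use suppP E1_def in auto)
  define q where "q = pmf P {(0,0)}"
  define r where "r = pmf P {}"
  have sum1: "r + q = 1"
  proof -
    have "sum (pmf P) {{}, {(0,0)}} = 1"
      by (rule sum_pmf_eq_1) (use suppP in \<open>auto simp: E1_def subset_singleton_iff\<close>)
    then show ?thesis by (simp add: q_def r_def)
  qed
  have q0: "0 \<le> r" by (simp add: r_def)
  have q1: "q \<le> 1" using sum1 q0 by linarith
  have vala: "alg_value alg {0} {1} {0} E1 {} w1 E1 \<le> q"
  proof -
    have "alg_value alg {0} {1} {0} E1 {} w1 E1 \<le>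
          measure_pmf.expectation P (\<lambda>M1. if M1 = {(0,0)} then 1 else 0)"
      unfolding alg_value_def P_def[symmetric]
    proof (rule exp_mono[OF finP])
      fix M1 assume M1: "M1 \<in> set_pmf P"
      let ?Q = "stage2_out alg {0} {1} {0} E1 {} w1 E1 M1"
      have sQ: "M2 = {}" if "M2 \<in> set_pmf ?Q" for M2
        using va insta adv that M1 unfolding valid_alg_def P_def by blast
      have "finite (set_pmf ?Q)" by (rule finite_subset[of _ "{{}}"]) (use sQ in auto)
      then show "measure_pmf.expectation ?Q (\<lambda>M2. weight w1 (M1 \<union> M2))
               \<le> (if M1 = {(0,0)} then 1 else 0)"
      proof (rule exp_le)
        fix M2 assume "M2 \<in> set_pmf ?Q"
        then have "M2 = {}" using sQ by auto
        moreover have "M1 = {} \<or> M1 = {(0,0)}" using suppP[OF M1] by (auto simp: E1_def subset_singleton_iff)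
        ultimately show "weight w1 (M1 \<union> M2) \<le> (if M1 = {(0,0)} then 1 else 0)"
          by (auto simp: weight_def w1_def)
      qed
    qed
    also have "\<dots> = q"
      by (subst integral_measure_pmf_real[where A="{{(0,0)}}"]) (auto simp: q_def split: if_splits)
    finally show ?thesis .
  qed
  have valb: "alg_value alg {0} {1} {0} E1 {(1,0)} (w2 W) E1 \<le> W * r + q" if W0: "0 \<le> W" for W
  proof -
    have "alg_value alg {0} {1} {0} E1 {(1,0)} (w2 W) E1 \<le>
          measure_pmf.expectation P (\<lambda>M1. if M1 = {(0,0)} then 1 else if M1 = {} then W else 0)"
      unfolding alg_value_def P2
    proof (rule exp_mono[OF finP])
      fix M1 assume M1: "M1 \<in> set_pmf P"
      let ?Q = "stage2_out alg {0} {1} {0} E1 {(1,0)} (w2 W) E1 M1"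
      have sQ: "M2 \<subseteq> {(1,0)} \<and> matching (M1 \<union> M2)" if "M2 \<in> set_pmf ?Q" for M2
        using va instb[OF W0] adv that M1 P2[of W] unfolding valid_alg_def by metis
      have "finite (set_pmf ?Q)" by (rule finite_subset[of _ "Pow {(1,0)}"]) (use sQ in auto)
      then show "measure_pmf.expectation ?Q (\<lambda>M2. weight (w2 W) (M1 \<union> M2))
               \<le> (if M1 = {(0,0)} then 1 else if M1 = {} then W else 0)"
      proof (rule exp_le)
        fix M2 assume "M2 \<in> set_pmf ?Q"
        then have m: "M2 \<subseteq> {(1,0)}" "matching (M1 \<union> M2)" using sQ by auto
        have "M1 = {} \<or> M1 = {(0,0)}" using suppP[OF M1] by (auto simp: E1_def subset_singleton_iff)
        moreover have "M2 = {} \<or> M2 = {(1,0)}" using m(1) by (auto simp: subset_singleton_iff)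
        ultimately show "weight (w2 W) (M1 \<union> M2) \<le> (if M1 = {(0,0)} then 1 else if M1 = {} then W else 0)"
          using m(2) W0 by (auto simp: weight_def w2_def matching_def)
      qed
    qed
    also have "\<dots> = W * r + q"
      by (subst integral_measure_pmf_real[where A="{{(0,0)},{}}"]) (auto simp: q_def r_def split: if_splits)
    finally show ?thesis .
  qed
  have optA: "1 \<le> OPT E1 {} w1"
  proof -
    have "weight w1 {(0,0)} \<le> OPT E1 {} w1" unfolding OPT_def
      by (rule Max_ge) (auto simp: E1_def intro: finite_subset[of _ "Pow {(0,0)}"])
    then show ?thesis by (simp add: weight_def w1_def)
  qed
  have optB: "W \<le> OPT E1 {(1,0)} (w2 W)" for W
  proof -
    have "weight (w2 W) {(1,0)} \<le> OPT E1 {(1,0)} (w2 W)" unfolding OPT_def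
      by (rule Max_ge) (auto simp: E1_def intro: finite_subset[of _ "Pow {(0,0),(1,0)}"])
    then show ?thesis by (simp add: weight_def w2_def)
  qed
  have Rq: "R \<le> q"
  proof -
    have "R * OPT E1 {} w1 \<le> q" using rob insta adv vala unfolding robust_def by fastforce
    moreover have "R * 1 \<le> R * OPT E1 {} w1" using optA R0 by (intro mult_left_mono) auto
    ultimately show ?thesis by simp
  qed
  have RW: "R * W \<le> W * r + q" if "1 \<le> W" for W
  proof -
    have "R * OPT E1 {(1,0)} (w2 W) \<le> W * r + q"
      using rob instb[of W] adv valb[of W] that unfolding robust_def by fastforce
    moreover have "R * W \<le> R * OPT E1 {(1,0)} (w2 W)" using optB R0 by (intro mult_left_mono) auto
    ultimately show ?thesis by simp
  qed
  have q1R: "q \<le> 1 - R"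
  proof (rule ccontr)
    assume "\<not> q \<le> 1 - R"
    then have d: "q + R - 1 > 0" by simp
    define W where "W = max 1 (2 / (q + R - 1))"
    have W1: "1 \<le> W" by (simp add: W_def)
    have "2 / (q + R - 1) \<le> W" by (simp add: W_def)
    then have "2 \<le> (q + R - 1) * W" using d by (simp add: field_simps)
    moreover have "R * W \<le> W * (1 - q) + q" using RW[OF W1] sum1 proof - have "r = 1 - q" using sum1 by linarith then show ?thesis using RW[OF W1] by simp qed
    ultimately show False using q1 by (simp add: algebra_simps)
  qed
  have "consistent C alg \<longrightarrow> C \<le> q"
  proof
    assume "consistent C alg"
    then have "C * ADVICE {} w1 E1 \<le> q" using insta adv vala unfolding consistent_def by fastforce
    moreover have "ADVICE {} w1 E1 = 1"
    proof -
      have "{M. M \<subseteq> {} \<and> matching (E1 \<union> M)} = {{}}" by (auto simp: E1_def)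
      then show ?thesis by (simp add: ADVICE_def weight_def E1_def w1_def)
    qed
    ultimately show "C \<le> q" by simp
  qed
  then show ?thesis using Rq q1R by blast
qed


definition algR :: "real \<Rightarrow> algorithm" where
  "algR R = ((\<lambda>D1 S E1 w A. bernoulli_pmf (1 - 2*R) \<bind>
       (\<lambda>b. if b then return_pmf A else bernoulli_pmf (1/2) \<bind>
          (\<lambda>c. return_pmf (if c then best E1 w {} else {})))),
     (\<lambda>D1 S E1 w1 A M1 D2 E2 w2. return_pmf (best E2 w2 M1)))"

lemma inst_facts:
  assumes "two_stage_instance D1 D2 S E1 E2 w"
  shows "finite E1" "finite E2" "E1 \<inter> E2 = {}" "\<forall>e\<in>E1 \<union> E2. 0 \<le> w e"
  using assms unfolding two_stage_instance_def
  by (auto intro: finite_subset[of _ "D1 \<times> S"] finite_subset[of _ "D2 \<times> S"])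

lemma part1:
  assumes R: "0 \<le> R" "R \<le> 1/2"
  shows "valid_alg (algR R) \<and> robust R (algR R) \<and> consistent (1 - R) (algR R)"
proof -
  have main: "alg_value (algR R) D1 D2 S E1 E2 w A \<ge> R * OPT E1 E2 w \<and>
              alg_value (algR R) D1 D2 S E1 E2 w A \<ge> (1 - R) * ADVICE E2 w A \<and>
      (\<forall>M1 \<in> set_pmf (stage1_out (algR R) D1 S E1 E2 w A).
            M1 \<subseteq> E1 \<and> matching M1 \<and>
            (\<forall>M2 \<in> set_pmf (stage2_out (algR R) D1 D2 S E1 E2 w A M1).
                M2 \<subseteq> E2 \<and> matching (M1 \<union> M2)))"
    if inst: "two_stage_instance D1 D2 S E1 E2 w" and adv: "valid_advice E1 A"
    for D1 D2 S E1 E2 w A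
  proof -
    note f = inst_facts[OF inst]
    have A: "A \<subseteq> E1" "matching A" using adv by (auto simp: valid_advice_def)
    define B1 where "B1 = best E1 (restrict_w E1 w) {}"
    define G where "G = (\<lambda>M1. best E2 (restrict_w E2 w) M1)"
    have B1: "B1 \<subseteq> E1" "matching B1" "\<And>M'. M' \<subseteq> E1 \<Longrightarrow> matching M' \<Longrightarrow> weight w M' \<le> weight w B1"
    proof -
      have b: "B1 \<subseteq> E1 \<and> matching ({} \<union> B1) \<and>
        (\<forall>M'. M' \<subseteq> E1 \<and> matching ({} \<union> M') \<longrightarrow> weight (restrict_w E1 w) M' \<le> weight (restrict_w E1 w) B1)"
        unfolding B1_def by (rule best_ok) (use f in auto)
      then show "B1 \<subseteq> E1" "matching B1" by auto
      fix M' assume "M' \<subseteq> E1" "matching M'"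
      then show "weight w M' \<le> weight w B1" using b by (auto simp: weight_restrict)
    qed
    have G: "G M1 \<subseteq> E2" "matching (M1 \<union> G M1)"
      "\<And>M'. M' \<subseteq> E2 \<Longrightarrow> matching (M1 \<union> M') \<Longrightarrow> weight w M' \<le> weight w (G M1)"
      if "matching M1" for M1
    proof -
      have b: "G M1 \<subseteq> E2 \<and> matching (M1 \<union> G M1) \<and>
        (\<forall>M'. M' \<subseteq> E2 \<and> matching (M1 \<union> M') \<longrightarrow> weight (restrict_w E2 w) M' \<le> weight (restrict_w E2 w) (G M1))"
        unfolding G_def by (rule best_ok) (use f that in auto)
      then show "G M1 \<subseteq> E2" "matching (M1 \<union> G M1)" by auto
      fix M' assume "M' \<subseteq> E2" "matching (M1 \<union> M')"
      then show "weight w M' \<le> weight w (G M1)" using b by (auto simp: weight_restrict)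
    qed
    have s1: "stage1_out (algR R) D1 S E1 E2 w A = bernoulli_pmf (1 - 2*R) \<bind>
       (\<lambda>b. if b then return_pmf A else bernoulli_pmf (1/2) \<bind>
          (\<lambda>c. return_pmf (if c then B1 else {})))"
      unfolding B1_def by (simp add: stage1_out_def algR_def)
    have s2: "stage2_out (algR R) D1 D2 S E1 E2 w A M1 = return_pmf (G M1)" for M1
      unfolding G_def by (simp add: stage2_out_def algR_def)
    have supp1: "set_pmf (stage1_out (algR R) D1 S E1 E2 w A) \<subseteq> {A, B1, {}}"
      unfolding s1 by (auto simp: set_bind_pmf split: if_splits)
    have valid: "\<forall>M1 \<in> set_pmf (stage1_out (algR R) D1 S E1 E2 w A).
            M1 \<subseteq> E1 \<and> matching M1 \<and>
            (\<forall>M2 \<in> set_pmf (stage2_out (algR R) D1 D2 S E1 E2 w A M1).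
                M2 \<subseteq> E2 \<and> matching (M1 \<union> M2))"
    proof
      fix M1 assume "M1 \<in> set_pmf (stage1_out (algR R) D1 S E1 E2 w A)"
      then have m: "M1 \<subseteq> E1 \<and> matching M1" using supp1 A B1 by auto
      then show "M1 \<subseteq> E1 \<and> matching M1 \<and>
            (\<forall>M2 \<in> set_pmf (stage2_out (algR R) D1 D2 S E1 E2 w A M1).
                M2 \<subseteq> E2 \<and> matching (M1 \<union> M2))"
        using G[of M1] by (auto simp: s2)
    qed
    define F where "F = (\<lambda>M1. weight w (M1 \<union> G M1))"
    have val: "alg_value (algR R) D1 D2 S E1 E2 w A = (1 - 2*R) * F A + R * F B1 + R * F {}"
    proof -
      have "alg_value (algR R) D1 D2 S E1 E2 w A = measure_pmf.expectation (stage1_out (algR R) D1 S E1 E2 w A) F"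
        by (simp add: alg_value_def s2 F_def)
      also have "\<dots> = (\<Sum>b\<in>UNIV. pmf (bernoulli_pmf (1 - 2*R)) b *\<^sub>R
          measure_pmf.expectation (if b then return_pmf A else bernoulli_pmf (1/2) \<bind>
          (\<lambda>c. return_pmf (if c then B1 else {}))) F)"
        unfolding s1 by (rule pmf_expectation_bind) (auto simp: set_bind_pmf)
      also have "\<dots> = (1 - 2*R) * F A + 2*R * measure_pmf.expectation (bernoulli_pmf (1/2) \<bind>
          (\<lambda>c. return_pmf (if c then B1 else {}))) F"
        using R by (simp add: UNIV_bool)
      also have "measure_pmf.expectation (bernoulli_pmf (1/2) \<bind>
          (\<lambda>c. return_pmf (if c then B1 else {}))) F = (\<Sum>c\<in>UNIV. pmf (bernoulli_pmf (1/2)) c *\<^sub>R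
          measure_pmf.expectation (return_pmf (if c then B1 else {})) F)"
        by (rule pmf_expectation_bind) auto
      also have "\<dots> = F B1 / 2 + F {} / 2" by (simp add: UNIV_bool)
      finally show ?thesis by (simp add: algebra_simps)
    qed
    have nn: "\<forall>e\<in>E1 \<union> E2. 0 \<le> w e" using f by auto
    have wun: "weight w (X \<union> Y) = weight w X + weight w Y" if "X \<subseteq> E1" "Y \<subseteq> E2" for X Y
      unfolding weight_def using that f by (intro sum.union_disjoint) (auto intro: finite_subset)
    have FA: "F A \<ge> ADVICE E2 w A"
    proof -
      let ?C = "{M. M \<subseteq> E2 \<and> matching (A \<union> M)}"
      have fin: "finite ?C" by (rule finite_subset[of _ "Pow E2"]) (use f in auto)
      have "Max (weight w ` ?C) \<le> weight w (G A)"
        using fin G(3)[OF A(2)] by (subst Max_le_iff) (auto intro: exI[of _ "{}"] simp: A(2))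
      then show ?thesis using wun[OF A(1) G(1)[OF A(2)]] by (simp add: ADVICE_def F_def)
    qed
    have FA0: "F A \<ge> 0" unfolding F_def
      by (rule weight_nonneg) (use nn A G(1)[OF A(2)] in auto)
    have FB1: "F B1 \<ge> weight w B1" unfolding F_def
      by (rule weight_mono) (use nn B1 G(1)[OF B1(2)] f in \<open>auto intro: finite_subset\<close>)
    define B2 where "B2 = G {}"
    have F0: "F {} = weight w B2" by (simp add: F_def B2_def)
    have B2: "\<And>M'. M' \<subseteq> E2 \<Longrightarrow> matching M' \<Longrightarrow> weight w M' \<le> weight w B2"
      using G(3)[of "{}"] by (simp add: B2_def)
    have ADVle: "ADVICE E2 w A \<le> weight w B1 + weight w B2"
    proof -
      let ?C = "{M. M \<subseteq> E2 \<and> matching (A \<union> M)}"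
      have fin: "finite ?C" by (rule finite_subset[of _ "Pow E2"]) (use f in auto)
      have "Max (weight w ` ?C) \<le> weight w B2"
        using fin by (subst Max_le_iff) (auto intro!: B2 intro: exI[of _ "{}"] simp: A(2) elim: matching_subset)
      then show ?thesis using B1(3)[OF A] by (simp add: ADVICE_def)
    qed
    have OPTle: "OPT E1 E2 w \<le> weight w B1 + weight w B2"
    proof -
      let ?C = "{M. M \<subseteq> E1 \<union> E2 \<and> matching M}"
      have fin: "finite ?C" by (rule finite_subset[of _ "Pow (E1 \<union> E2)"]) (use f in auto)
      have "weight w M \<le> weight w B1 + weight w B2" if M: "M \<subseteq> E1 \<union> E2" "matching M" for M
      proof -
        have "weight w M = weight w (M \<inter> E1) + weight w (M - E1)"
          unfolding weight_def using M f by (intro sum.Int_Diff) (auto intro: finite_subset)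
        moreover have "weight w (M \<inter> E1) \<le> weight w B1" using M by (intro B1(3)) (auto elim: matching_subset)
        moreover have "weight w (M - E1) \<le> weight w B2" using M by (intro B2) (auto elim: matching_subset)
        ultimately show ?thesis by simp
      qed
      then show ?thesis using fin unfolding OPT_def by (subst Max_le_iff) (auto intro: exI[of _ "{}"])
    qed
    have c1: "(1 - 2*R) * F A \<ge> (1 - 2*R) * ADVICE E2 w A" using FA R by (intro mult_left_mono) auto
    have c2: "R * F B1 \<ge> R * weight w B1" using FB1 R by (intro mult_left_mono) auto
    have c3: "R * (weight w B1 + weight w B2) \<ge> R * ADVICE E2 w A" using ADVle R by (intro mult_left_mono) auto
    have c4: "R * (weight w B1 + weight w B2) \<ge> R * OPT E1 E2 w" using OPTle R by (intro mult_left_mono) auto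
    have c5: "(1 - 2*R) * F A \<ge> 0" using FA0 R by simp
    show ?thesis using valid val c1 c2 c3 c4 c5 F0 by (simp add: algebra_simps)
  qed
  show ?thesis using main unfolding valid_alg_def robust_def consistent_def by blast
qed

theorem mainTheorem7:
  shows "(\<forall>R::real. 0 \<le> R \<and> R \<le> 1/2 \<longrightarrow>
            (\<exists>alg. valid_alg alg \<and> robust R alg \<and> consistent (1 - R) alg))
       \<and> (\<forall>(R::real) C alg. 0 \<le> R \<and> valid_alg alg \<and> robust R alg \<and> consistent C alg
            \<longrightarrow> C \<le> 1 - R)
       \<and> (\<forall>(R::real) alg. valid_alg alg \<and> robust R alg \<longrightarrow> R \<le> 1/2)"
proof (intro conjI allI impI)
  fix R :: real assume "0 \<le> R \<and> R \<le> 1/2"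
  then show "\<exists>alg. valid_alg alg \<and> robust R alg \<and> consistent (1 - R) alg"
    using part1 by blast
next
  fix R C :: real and alg assume h: "0 \<le> R \<and> valid_alg alg \<and> robust R alg \<and> consistent C alg"
  then obtain q where "R \<le> q \<and> q \<le> 1 - R \<and> (consistent C alg \<longrightarrow> C \<le> q)"
    using key[of alg R C] by blast
  then show "C \<le> 1 - R" using h by linarith
next
  fix R :: real and alg assume h: "valid_alg alg \<and> robust R alg"
  show "R \<le> 1/2"
  proof (cases "R < 0")
    case False
    then obtain q where "R \<le> q \<and> q \<le> 1 - R"
      using key[of alg R 0] h by force
    then show ?thesis by linarith
  qed simp
qed

end
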